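(* Let $A \in \mathbb{C}^{N\times N}$ and $\{\omega_j\}_{j\in\mathbb{N}}\subset\mathbb{C}\setminus\{0\}$. For $\iota\in\{1,2\}$ let $\{\mathcal{Q}^{(\iota)}_j\}_{j\in\mathbb{N}}$ and $\{\mathcal{P}^{(\iota)}_j\}_{j\in\mathbb{N}}$ be sequences of linear subspaces of $\mathbb{C}^N$ with $\mathcal{Q}^{(\iota)}_{j+1}\subseteq\mathcal{Q}^{(\iota)}_j$ and $\mathcal{P}^{(\iota)}_{j+1}\supseteq\mathcal{P}^{(\iota)}_j$ for all $j\in\mathbb{N}$, and suppose $\mathcal{Q}^{(1)}_j\subseteq\mathcal{Q}^{(2)}_j$ and $\mathcal{P}^{(1)}_j\supseteq\mathcal{P}^{(2)}_j$ for all $j\in\mathbb{N}$. Let $\mathcal{M}^{(\iota)}_j$, $j\in\mathbb{N}_0$, be the $\mathcal{M}$-spaces defined by $\mathcal{M}^{(\iota)}_0=\mathbb{C}^N$ and $$\mathcal{M}^{(\iota)}_j = (I-\omega_j A)\cdot\big(\mathcal{M}^{(\iota)}_{j-1}\cap(\mathcal{P}^{(\iota)}_j)^\perp\big) + \mathcal{Q}^{(\iota)}_j,\quad j\in\mathbb{N}.$$ Then $\mathcal{M}^{(\iota)}_{j+1}\subseteq\mathcal{M}^{(\iota)}_j$ for all $j\in\mathbb{N}_0$ and $\iota\in\{1,2\}$, and $\mathcal{M}^{(1)}_j\subseteq\mathcal{M}^{(2)}_j$ for all $j\in\mathbb{N}_0$.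
   Context: $(\cdot)^\perp$ denotes the orthogonal complement in $\mathbb{C}^N$ with respect to the standard Hermitian inner product, and $+$ denotes the sum of subspaces. The spaces $\mathcal{Q}_j$ are called add-spaces and the $\mathcal{P}_j$ cut-spaces. *)

theory Defs
  imports "HOL-Analysis.Analysis"
begin

text \<open>C^N is modelled as complex^'n (N = CARD('n)), matrices as complex^'n^'n.\<close>

definition csubspace :: "(complex^'n) set \<Rightarrow> bool" where
  "csubspace S \<longleftrightarrow> 0 \<in> S \<and> (\<forall>x\<in>S. \<forall>y\<in>S. x + y \<in> S) \<and> (\<forall>c. \<forall>x\<in>S. c *s x \<in> S)"

definition hinner :: "complex^'n \<Rightarrow> complex^'n \<Rightarrow> complex" where
  "hinner x y = (\<Sum>i\<in>UNIV. x $ i * cnj (y $ i))"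

definition hperp :: "(complex^'n) set \<Rightarrow> (complex^'n) set" where
  "hperp S = {y. \<forall>x\<in>S. hinner x y = 0}"

definition ssum :: "(complex^'n) set \<Rightarrow> (complex^'n) set \<Rightarrow> (complex^'n) set" where
  "ssum S T = {x + y | x y. x \<in> S \<and> y \<in> T}"

primrec Mspace :: "(nat \<Rightarrow> complex) \<Rightarrow> complex^'n^'n \<Rightarrow> (nat \<Rightarrow> (complex^'n) set)
    \<Rightarrow> (nat \<Rightarrow> (complex^'n) set) \<Rightarrow> nat \<Rightarrow> (complex^'n) set" where
  "Mspace \<omega> A P Q 0 = UNIV"
| "Mspace \<omega> A P Q (Suc j) =
     ssum ((\<lambda>x. x - \<omega> (Suc j) *s (A *v x)) ` (Mspace \<omega> A P Q j \<inter> hperp (P (Suc j))))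
          (Q (Suc j))"

end

theory Submission
  imports Defs
begin

lemma cs_UNIV: "csubspace (UNIV :: (complex^'n) set)"
  by (simp add: csubspace_def)

lemma cs_Int: "csubspace S \<Longrightarrow> csubspace T \<Longrightarrow> csubspace (S \<inter> T)"
  by (simp add: csubspace_def)

lemma hinner_add: "hinner x (y + z) = hinner x y + hinner x z"
  by (simp add: hinner_def sum.distrib algebra_simps)

lemma hinner_scale: "hinner x (c *s y) = cnj c * hinner x y"
  by (simp add: hinner_def sum_distrib_left algebra_simps)

lemma cs_hperp: "csubspace (hperp S)"
  unfolding csubspace_def hperp_def
  by (auto simp: hinner_add hinner_scale) (simp add: hinner_def)

lemma hperp_anti: "S \<subseteq> T \<Longrightarrow> hperp T \<subseteq> hperp S"
  by (auto simp: hperp_def)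

lemma mv_add: "(A::complex^'n^'n) *v (x + y) = A *v x + A *v y"
  by (simp add: vec_eq_iff matrix_vector_mult_def sum.distrib algebra_simps)

lemma mv_scale: "(A::complex^'n^'n) *v (c *s x) = c *s (A *v x)"
  by (simp add: vec_eq_iff matrix_vector_mult_def sum_distrib_left algebra_simps)

lemma cs_image:
  assumes "csubspace S"
  shows "csubspace ((\<lambda>x. x - w *s ((A::complex^'n^'n) *v x)) ` S)"
  unfolding csubspace_def
proof (intro conjI ballI allI)
  show "0 \<in> (\<lambda>x. x - w *s (A *v x)) ` S"
    using assms by (auto simp: csubspace_def image_iff intro!: bexI[of _ 0])
next
  fix a b assume "a \<in> (\<lambda>x. x - w *s (A *v x)) ` S" "b \<in> (\<lambda>x. x - w *s (A *v x)) ` S"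
  then obtain x y where xy: "x \<in> S" "y \<in> S" "a = x - w *s (A *v x)" "b = y - w *s (A *v y)" by auto
  have "a + b = (x + y) - w *s (A *v (x + y))"
    by (simp add: xy mv_add vec_eq_iff algebra_simps)
  moreover have "x + y \<in> S" using assms xy by (simp add: csubspace_def)
  ultimately show "a + b \<in> (\<lambda>x. x - w *s (A *v x)) ` S" by auto
next
  fix c a assume "a \<in> (\<lambda>x. x - w *s (A *v x)) ` S"
  then obtain x where xy: "x \<in> S" "a = x - w *s (A *v x)" by auto
  have "c *s a = (c *s x) - w *s (A *v (c *s x))"
    by (simp add: xy mv_scale vec_eq_iff algebra_simps)
  moreover have "c *s x \<in> S" using assms xy by (simp add: csubspace_def)
  ultimately show "c *s a \<in> (\<lambda>x. x - w *s (A *v x)) ` S" by auto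
qed

lemma cs_ssum: "csubspace S \<Longrightarrow> csubspace T \<Longrightarrow> csubspace (ssum S T)"
  unfolding csubspace_def ssum_def
proof (intro conjI ballI allI)
  assume a: "0 \<in> S \<and> (\<forall>x\<in>S. \<forall>y\<in>S. x + y \<in> S) \<and> (\<forall>c. \<forall>x\<in>S. c *s x \<in> S)"
     "0 \<in> T \<and> (\<forall>x\<in>T. \<forall>y\<in>T. x + y \<in> T) \<and> (\<forall>c. \<forall>x\<in>T. c *s x \<in> T)"
  show "0 \<in> {x + y |x y. x \<in> S \<and> y \<in> T}" using a by force
  fix u v assume "u \<in> {x + y |x y. x \<in> S \<and> y \<in> T}" "v \<in> {x + y |x y. x \<in> S \<and> y \<in> T}"
  then obtain x y x' y' where h: "x \<in> S" "y \<in> T" "x' \<in> S" "y' \<in> T" "u = x + y" "v = x' + y'" by blast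
  have "u + v = (x + x') + (y + y')" by (simp add: h algebra_simps)
  then show "u + v \<in> {x + y |x y. x \<in> S \<and> y \<in> T}" using a h by blast
next
  fix c u
  assume a: "0 \<in> S \<and> (\<forall>x\<in>S. \<forall>y\<in>S. x + y \<in> S) \<and> (\<forall>c. \<forall>x\<in>S. c *s x \<in> S)"
     "0 \<in> T \<and> (\<forall>x\<in>T. \<forall>y\<in>T. x + y \<in> T) \<and> (\<forall>c. \<forall>x\<in>T. c *s x \<in> T)"
    and "u \<in> {x + y |x y. x \<in> S \<and> y \<in> T}"
  then obtain x y where h: "x \<in> S" "y \<in> T" "u = x + y" by blast
  have "c *s u = c *s x + c *s y" by (simp add: h vec_eq_iff algebra_simps)
  then show "c *s u \<in> {x + y |x y. x \<in> S \<and> y \<in> T}" using a h by blast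
qed

lemma cs_M:
  assumes "\<And>j. j \<ge> 1 \<Longrightarrow> csubspace (Q j)"
  shows "csubspace (Mspace \<omega> A P Q j)"
proof (induction j)
  case 0 then show ?case by (simp add: cs_UNIV)
next
  case (Suc j)
  show ?case using Suc assms[of "Suc j"]
    by (simp add: cs_ssum cs_image cs_Int cs_hperp)
qed

lemma M_mono:
  assumes om: "\<And>j. j \<ge> 1 \<Longrightarrow> \<omega> j \<noteq> 0"
    and sQ: "\<And>j. j \<ge> 1 \<Longrightarrow> csubspace (Q j)"
    and Qm: "\<And>j. j \<ge> 1 \<Longrightarrow> Q (Suc j) \<subseteq> Q j"
    and Pm: "\<And>j. j \<ge> 1 \<Longrightarrow> P j \<subseteq> P (Suc j)"
  shows "Mspace \<omega> A P Q (Suc j) \<subseteq> Mspace \<omega> A P Q j"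
proof (induction j)
  case 0 then show ?case by simp
next
  case (Suc j)
  let ?M = "Mspace \<omega> A P Q"
  have cs: "csubspace (?M (Suc j))" using cs_M sQ by blast
  show ?case
  proof
    fix u assume "u \<in> ?M (Suc (Suc j))"
    then obtain v q where h: "v \<in> ?M (Suc j)" "v \<in> hperp (P (Suc (Suc j)))" "q \<in> Q (Suc (Suc j))"
      "u = (v - \<omega> (Suc (Suc j)) *s (A *v v)) + q"
    proof -
      have "u \<in> ssum ((\<lambda>x. x - \<omega> (Suc (Suc j)) *s (A *v x)) ` (?M (Suc j) \<inter> hperp (P (Suc (Suc j))))) (Q (Suc (Suc j)))"
        using \<open>u \<in> ?M (Suc (Suc j))\<close> by (simp only: Mspace.simps(2)[of \<omega> A P Q "Suc j"])
      then obtain a q where "a \<in> (\<lambda>x. x - \<omega> (Suc (Suc j)) *s (A *v x)) ` (?M (Suc j) \<inter> hperp (P (Suc (Suc j))))" "q \<in> Q (Suc (Suc j))" "u = a + q"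
        unfolding ssum_def by blast
      then obtain v where "v \<in> ?M (Suc j)" "v \<in> hperp (P (Suc (Suc j)))" "a = v - \<omega> (Suc (Suc j)) *s (A *v v)"
        by auto
      then show ?thesis using that \<open>q \<in> Q (Suc (Suc j))\<close> \<open>u = a + q\<close> by simp
    qed
    have v1: "v \<in> ?M j" using h Suc.IH by blast
    have v2: "v \<in> hperp (P (Suc j))" using h hperp_anti[OF Pm[of "Suc j"]] by auto
    have q1: "q \<in> Q (Suc j)" using h Qm[of "Suc j"] by auto
    have z: "0 \<in> Q (Suc j)" using sQ[of "Suc j"] by (simp add: csubspace_def)
    have w: "v - \<omega> (Suc j) *s (A *v v) \<in> ?M (Suc j)"
    proof -
      have "v - \<omega> (Suc j) *s (A *v v) \<in> (\<lambda>x. x - \<omega> (Suc j) *s (A *v x)) ` (?M j \<inter> hperp (P (Suc j)))"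
        using v1 v2 by blast
      then have "v - \<omega> (Suc j) *s (A *v v) + 0 \<in> ?M (Suc j)"
        unfolding Mspace.simps(2)[of \<omega> A P Q j] ssum_def using z by blast
      then show ?thesis by simp
    qed
    have qM: "q \<in> ?M (Suc j)"
    proof -
      have "0 \<in> ?M j \<inter> hperp (P (Suc j))" using cs_M[of Q \<omega> A P j, OF sQ] cs_hperp[of "P (Suc j)"] by (simp add: csubspace_def)
      then have "(\<lambda>x. x - \<omega> (Suc j) *s (A *v x)) 0 \<in> (\<lambda>x. x - \<omega> (Suc j) *s (A *v x)) ` (?M j \<inter> hperp (P (Suc j)))"
        by blast
      then have "(\<lambda>x. x - \<omega> (Suc j) *s (A *v x)) 0 + q \<in> ?M (Suc j)"
        unfolding Mspace.simps(2)[of \<omega> A P Q j] ssum_def using q1 by blast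
      then show ?thesis by simp
    qed
    have sm: "\<And>c x. x \<in> ?M (Suc j) \<Longrightarrow> c *s x \<in> ?M (Suc j)"
      and ad: "\<And>x y. x \<in> ?M (Suc j) \<Longrightarrow> y \<in> ?M (Suc j) \<Longrightarrow> x + y \<in> ?M (Suc j)"
      using cs by (auto simp: csubspace_def)
    have "(- 1 / \<omega> (Suc j)) *s (v - \<omega> (Suc j) *s (A *v v)) + (1 / \<omega> (Suc j)) *s v = A *v v"
      using om[of "Suc j"] by (simp add: vec_eq_iff field_simps)
    then have Av: "A *v v \<in> ?M (Suc j)" using sm ad w h(1) by metis
    have "u = v + (- \<omega> (Suc (Suc j))) *s (A *v v) + q"
      by (simp add: h vec_eq_iff algebra_simps)
    then show "u \<in> ?M (Suc j)" using ad sm Av h(1) qM by metis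
  qed
qed

lemma ssum_mono: "S \<subseteq> S' \<Longrightarrow> T \<subseteq> T' \<Longrightarrow> ssum S T \<subseteq> ssum S' T'"
  unfolding ssum_def by blast

lemma M_cmp:
  assumes Q12: "\<And>j. j \<ge> 1 \<Longrightarrow> Q1 j \<subseteq> Q2 j"
    and P12: "\<And>j. j \<ge> 1 \<Longrightarrow> P2 j \<subseteq> P1 j"
  shows "Mspace \<omega> A P1 Q1 j \<subseteq> Mspace \<omega> A P2 Q2 j"
proof (induction j)
  case 0 then show ?case by simp
next
  case (Suc j)
  have "hperp (P1 (Suc j)) \<subseteq> hperp (P2 (Suc j))" using hperp_anti P12[of "Suc j"] by simp
  then have "Mspace \<omega> A P1 Q1 j \<inter> hperp (P1 (Suc j)) \<subseteq> Mspace \<omega> A P2 Q2 j \<inter> hperp (P2 (Suc j))"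
    using Suc.IH by (rule Int_mono[rotated])
  then show ?case
    by (simp only: Mspace.simps(2)) (intro ssum_mono image_mono Q12, auto)
qed

theorem theorem1:
  fixes A :: "complex^'n^'n"
    and \<omega> :: "nat \<Rightarrow> complex"
    and Q1 Q2 P1 P2 :: "nat \<Rightarrow> (complex^'n) set"
  assumes \<omega>_nz: "\<And>j. j \<ge> 1 \<Longrightarrow> \<omega> j \<noteq> 0"
    and sub: "\<And>j. j \<ge> 1 \<Longrightarrow> csubspace (Q1 j) \<and> csubspace (Q2 j) \<and> csubspace (P1 j) \<and> csubspace (P2 j)"
    and Q1_mono: "\<And>j. j \<ge> 1 \<Longrightarrow> Q1 (Suc j) \<subseteq> Q1 j"
    and Q2_mono: "\<And>j. j \<ge> 1 \<Longrightarrow> Q2 (Suc j) \<subseteq> Q2 j"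
    and P1_mono: "\<And>j. j \<ge> 1 \<Longrightarrow> P1 j \<subseteq> P1 (Suc j)"
    and P2_mono: "\<And>j. j \<ge> 1 \<Longrightarrow> P2 j \<subseteq> P2 (Suc j)"
    and Q12: "\<And>j. j \<ge> 1 \<Longrightarrow> Q1 j \<subseteq> Q2 j"
    and P12: "\<And>j. j \<ge> 1 \<Longrightarrow> P2 j \<subseteq> P1 j"
  shows "(\<forall>j. Mspace \<omega> A P1 Q1 (Suc j) \<subseteq> Mspace \<omega> A P1 Q1 j)
       \<and> (\<forall>j. Mspace \<omega> A P2 Q2 (Suc j) \<subseteq> Mspace \<omega> A P2 Q2 j)
       \<and> (\<forall>j. Mspace \<omega> A P1 Q1 j \<subseteq> Mspace \<omega> A P2 Q2 j)"
proof (intro conjI allI)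
  fix j
  show "Mspace \<omega> A P1 Q1 (Suc j) \<subseteq> Mspace \<omega> A P1 Q1 j"
    by (rule M_mono) (use \<omega>_nz sub Q1_mono P1_mono in auto)
  show "Mspace \<omega> A P2 Q2 (Suc j) \<subseteq> Mspace \<omega> A P2 Q2 j"
    by (rule M_mono) (use \<omega>_nz sub Q2_mono P2_mono in auto)
  show "Mspace \<omega> A P1 Q1 j \<subseteq> Mspace \<omega> A P2 Q2 j"
    by (rule M_cmp) (use Q12 P12 in auto)
qed

end
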